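(* For all integers $s,t$ with $0\leq s\leq t$ and $t\geq 1$, the complete bipartite graph $K_{s,t}$ (where $K_{0,t}=\overline{K_t}$) satisfies $\operatorname{th}_{\operatorname{H}}(K_{s,t})=\lceil 2\sqrt{t}+s-1\rceil$. Since $\kappa(K_{s,t})=s$ and $|V(K_{s,t})|=s+t$, this shows the bound $\operatorname{th}_{\operatorname{H}}(G)\geq\lceil 2\sqrt{n-\kappa}+\kappa-1\rceil$ (for $G$ of order $n$ and vertex connectivity $\kappa$) is attained for every $\kappa\geq 0$.
   Context: All graphs are finite, simple and undirected; $\kappa$ denotes vertex connectivity. Hopping color change rule: a blue vertex $v$ may force a white vertex $w$ to become blue if $v$ has not previously performed a force and every neighbor of $v$ is blue. For an initial blue set $B$, a chronological list of forces of $B$ is a sequence of such forces applied one at a time until no further force is possible; its underlying unordered set is a set of forces of $B$. $B$ is a hopping forcing set if some chronological list of forces of $B$ turns all vertices blue. For a set of forces $\mathcal F$ of $B$, let $\mathcal F^{(0)}=B$ and for $t\geq1$ let $\mathcal F^{(t)}$ be the set of vertices $w\notin U_{t-1}:=\bigcup_{i=0}^{t-1}\mathcal F^{(i)}$ for which there is $(v\to w)\in\mathcal F$ with $v\in U_{t-1}$ and all neighbors of $v$ in $U_{t-1}$. $\operatorname{pt}_{\operatorname{H}}(G;\mathcal F)$ is the least $t$ with $\bigcup_{i=0}^t\mathcal F^{(i)}=V(G)$ ($\infty$ if none); $\operatorname{pt}_{\operatorname{H}}(G;B)$ is the minimum of $\operatorname{pt}_{\operatorname{H}}(G;\mathcal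 F)$ over sets of forces $\mathcal F$ of $B$ ($\infty$ if $B$ is not a hopping forcing set). $\operatorname{th}_{\operatorname{H}}(G)=\min_{B\subseteq V(G)}\big(|B|+\operatorname{pt}_{\operatorname{H}}(G;B)\big)$. *)

theory Defs
  imports Complex_Main "HOL-Library.Extended_Nat"
begin

text \<open>A finite simple graph is given by a vertex set V and a symmetric irreflexive
  adjacency relation E (only its restriction to V matters).\<close>

definition nbrs :: "'a set \<Rightarrow> ('a \<Rightarrow> 'a \<Rightarrow> bool) \<Rightarrow> 'a \<Rightarrow> 'a set" where
  "nbrs V E v = {u \<in> V. E v u}"

text \<open>v may force w, given current blue set Bl and set Us of vertices that already forced.\<close>
definition can_force :: "'a set \<Rightarrow> ('a \<Rightarrow> 'a \<Rightarrow> bool) \<Rightarrow> 'a set \<Rightarrow> 'a set \<Rightarrow> 'a \<Rightarrow> 'a \<Rightarrow> bool" where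
  "can_force V E Bl Us v w \<longleftrightarrow>
     v \<in> Bl \<and> v \<notin> Us \<and> nbrs V E v \<subseteq> Bl \<and> w \<in> V \<and> w \<notin> Bl"

fun chron :: "'a set \<Rightarrow> ('a \<Rightarrow> 'a \<Rightarrow> bool) \<Rightarrow> 'a set \<Rightarrow> 'a set \<Rightarrow> ('a \<times> 'a) list \<Rightarrow> bool" where
  "chron V E Bl Us [] = (\<not> (\<exists>v w. can_force V E Bl Us v w))"
| "chron V E Bl Us ((v, w) # fs) =
     (can_force V E Bl Us v w \<and> chron V E (insert w Bl) (insert v Us) fs)"

definition chron_list :: "'a set \<Rightarrow> ('a \<Rightarrow> 'a \<Rightarrow> bool) \<Rightarrow> 'a set \<Rightarrow> ('a \<times> 'a) list \<Rightarrow> bool" where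
  "chron_list V E B fs \<longleftrightarrow> chron V E B {} fs"

definition force_set :: "'a set \<Rightarrow> ('a \<Rightarrow> 'a \<Rightarrow> bool) \<Rightarrow> 'a set \<Rightarrow> ('a \<times> 'a) set \<Rightarrow> bool" where
  "force_set V E B F \<longleftrightarrow> (\<exists>fs. chron_list V E B fs \<and> F = set fs)"

definition hopping_forcing_set :: "'a set \<Rightarrow> ('a \<Rightarrow> 'a \<Rightarrow> bool) \<Rightarrow> 'a set \<Rightarrow> bool" where
  "hopping_forcing_set V E B \<longleftrightarrow> (\<exists>fs. chron_list V E B fs \<and> B \<union> snd ` set fs = V)"

text \<open>U_t = union of F^(0), ..., F^(t).\<close>
fun rounds :: "'a set \<Rightarrow> ('a \<Rightarrow> 'a \<Rightarrow> bool) \<Rightarrow> 'a set \<Rightarrow> ('a \<times> 'a) set \<Rightarrow> nat \<Rightarrow> 'a set" where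
  "rounds V E B F 0 = B"
| "rounds V E B F (Suc t) = rounds V E B F t \<union>
     {w. w \<notin> rounds V E B F t \<and>
         (\<exists>v. (v, w) \<in> F \<and> v \<in> rounds V E B F t \<and> nbrs V E v \<subseteq> rounds V E B F t)}"

definition pt_H_forces :: "'a set \<Rightarrow> ('a \<Rightarrow> 'a \<Rightarrow> bool) \<Rightarrow> 'a set \<Rightarrow> ('a \<times> 'a) set \<Rightarrow> enat" where
  "pt_H_forces V E B F =
     (if \<exists>t. rounds V E B F t = V then enat (LEAST t. rounds V E B F t = V) else \<infinity>)"

definition pt_H :: "'a set \<Rightarrow> ('a \<Rightarrow> 'a \<Rightarrow> bool) \<Rightarrow> 'a set \<Rightarrow> enat" where
  "pt_H V E B =
     (if hopping_forcing_set V E B then (INF F \<in> {F. force_set V E B F}. pt_H_forces V E B F)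
      else \<infinity>)"

definition th_H :: "'a set \<Rightarrow> ('a \<Rightarrow> 'a \<Rightarrow> bool) \<Rightarrow> enat" where
  "th_H V E = (INF B \<in> Pow V. enat (card B) + pt_H V E B)"

definition Kst_V :: "nat \<Rightarrow> nat \<Rightarrow> (nat + nat) set" where
  "Kst_V s t = Inl ` {..<s} \<union> Inr ` {..<t}"

definition Kst_E :: "(nat + nat) \<Rightarrow> (nat + nat) \<Rightarrow> bool" where
  "Kst_E x y \<longleftrightarrow> isl x \<noteq> isl y"

end

theory Submission
  imports Defs
begin

lemma chron_props:
  "chron V E Bl Us fs \<Longrightarrow> distinct (map fst fs) \<and> fst ` set fs \<inter> Us = {} \<and> snd ` set fs \<subseteq> V"
proof (induction fs arbitrary: Bl Us)
  case Nil then show ?case by simp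
next
  case (Cons a fs)
  obtain v w where a: "a = (v, w)" by (cases a)
  from Cons.prems a have cf: "can_force V E Bl Us v w"
    and ch: "chron V E (insert w Bl) (insert v Us) fs" by auto
  from Cons.IH[OF ch] cf a show ?case by (auto simp: can_force_def)
qed

lemma nbrs_Inr: "nbrs (Kst_V s t) Kst_E (Inr i) = Inl ` {..<s}"
  by (auto simp: nbrs_def Kst_V_def Kst_E_def)
lemma nbrs_Inl: "nbrs (Kst_V s t) Kst_E (Inl i) = Inr ` {..<t}"
  by (auto simp: nbrs_def Kst_V_def Kst_E_def)

lemma rounds_mono: "m \<le> n \<Longrightarrow> rounds V E B F m \<subseteq> rounds V E B F n"
  by (induction n) (auto simp: le_Suc_eq)

lemma rounds_sub: "B \<subseteq> V \<Longrightarrow> (\<And>v w. (v,w) \<in> F \<Longrightarrow> w \<in> V) \<Longrightarrow> rounds V E B F k \<subseteq> V"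
  by (induction k) auto

lemma rounds_stuck:
  assumes "\<forall>v\<in>B. \<not> nbrs V E v \<subseteq> B"
  shows "rounds V E B F k = B"
  using assms by (induction k) auto

lemma generic:
  fixes V :: "'a set"
  assumes finV: "finite V" and E: "\<And>x y. E x y \<longleftrightarrow> P x \<noteq> P y"
    and BV: "B \<subseteq> V" and XB: "{v\<in>V. P v} \<subseteq> B"
    and FV: "\<And>v w. (v,w)\<in>F \<Longrightarrow> w\<in>V"
    and Ffun: "\<And>v w w'. (v,w)\<in>F \<Longrightarrow> (v,w')\<in>F \<Longrightarrow> w = w'"
    and fin: "rounds V E B F p = V" and notfin: "\<And>k. k < p \<Longrightarrow> rounds V E B F k \<noteq> V"
  shows "card {v\<in>V. \<not> P v} \<le> card (B \<inter> {v. \<not> P v}) * (p+1)"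
proof -
  define U where "U k = rounds V E B F k" for k
  define c where "c = card (B \<inter> {v. \<not> P v})"
  define M where "M k = (if k = 0 then B \<inter> {v. \<not> P v} else U k - U (k - 1))" for k
  have UV: "U k \<subseteq> V" for k unfolding U_def by (rule rounds_sub[OF BV FV])
  have Umono: "m \<le> n \<Longrightarrow> U m \<subseteq> U n" for m n unfolding U_def by (rule rounds_mono)
  have BU: "B \<subseteq> U k" for k using Umono[of 0 k] by (simp add: U_def)
  have nb: "nbrs V E v = {u\<in>V. P u \<noteq> P v}" for v by (auto simp: nbrs_def E)
  have finM: "finite (M k)" for k using UV[of k] BV finV
    by (auto simp: M_def intro: finite_subset)
  have key: "card (M (Suc k)) \<le> card (M k)" if kp: "k < p" for k
  proof -
    have forcer: "\<exists>v. v \<in> M k \<and> (v, w) \<in> F" if w: "w \<in> M (Suc k)" for w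
    proof -
      from w have wn: "w \<notin> U k" and "\<exists>v. (v, w) \<in> F \<and> v \<in> U k \<and> nbrs V E v \<subseteq> U k"
        by (auto simp: M_def U_def)
      then obtain v where vw: "(v, w) \<in> F" and vU: "v \<in> U k" and vn: "nbrs V E v \<subseteq> U k"
        by blast
      have nP: "\<not> P v"
      proof
        assume "P v"
        then have "{u\<in>V. \<not> P u} \<subseteq> U k" using vn nb[of v] by auto
        moreover have "{u\<in>V. P u} \<subseteq> U k" using XB BU[of k] by auto
        ultimately have "V \<subseteq> U k" by auto
        with UV[of k] have "U k = V" by auto
        with notfin[OF kp] show False by (simp add: U_def)
      qed
      have "v \<in> M k"
      proof (cases k)
        case 0
        then show ?thesis using vU nP by (simp add: M_def U_def)
      next
        case (Suc j)
        have "v \<notin> U j"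
        proof
          assume vj: "v \<in> U j"
          have "nbrs V E v \<subseteq> U j" using nb[of v] nP XB BU[of j] by auto
          moreover have "w \<notin> U j" using wn Umono[of j k] Suc by auto
          ultimately have "w \<in> U (Suc j)" using vj vw by (auto simp: U_def)
          with wn Suc show False by simp
        qed
        then show ?thesis using vU Suc by (simp add: M_def)
      qed
      with vw show ?thesis by blast
    qed
    define f where "f w = (SOME v. v \<in> M k \<and> (v, w) \<in> F)" for w
    have fw: "f w \<in> M k \<and> (f w, w) \<in> F" if "w \<in> M (Suc k)" for w
      unfolding f_def by (rule someI_ex[OF forcer[OF that]])
    have "inj_on f (M (Suc k))"
      by (rule inj_onI) (metis fw Ffun)
    moreover have "f ` M (Suc k) \<subseteq> M k" using fw by auto
    ultimately show ?thesis using finM[of k] by (rule card_inj_on_le)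
  qed
  have Mc: "k \<le> p \<Longrightarrow> card (M k) \<le> c" for k
  proof (induction k)
    case 0 then show ?case by (simp add: M_def c_def)
  next
    case (Suc k) then show ?case using key[of k] by simp
  qed
  have Ucard: "k \<le> p \<Longrightarrow> card (U k) \<le> card B + k * c" for k
  proof (induction k)
    case 0 then show ?case by (simp add: U_def)
  next
    case (Suc k)
    have "U (Suc k) = U k \<union> M (Suc k)" using Umono[of k "Suc k"] by (auto simp: M_def)
    then have "card (U (Suc k)) \<le> card (U k) + card (M (Suc k))" by (simp add: card_Un_le)
    with Suc Mc[of "Suc k"] show ?case by simp
  qed
  have "card V \<le> card B + p * c" using Ucard[of p] fin by (simp add: U_def)
  moreover have "card V = card {v\<in>V. P v} + card {v\<in>V. \<not> P v}"
  proof -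
    have "V = {v\<in>V. P v} \<union> {v\<in>V. \<not> P v}" by auto
    then show ?thesis using finV by (metis (no_types, lifting) card_Un_disjoint disjoint_iff
          finite_Un mem_Collect_eq)
  qed
  moreover have "card B = card {v\<in>V. P v} + c"
  proof -
    have "B = {v\<in>V. P v} \<union> (B \<inter> {v. \<not> P v})" using XB BV by auto
    moreover have "finite B" using BV finV by (rule finite_subset)
    ultimately show ?thesis unfolding c_def
      by (metis (no_types, lifting) card_Un_disjoint disjoint_iff finite_Un
          mem_Collect_eq IntE)
  qed
  ultimately show ?thesis unfolding c_def by (simp add: mult.commute)
qed


lemma amgm_sqrt:
  fixes t b p :: nat
  assumes "t \<le> b * (p + 1)"
  shows "2 * sqrt (real t) \<le> real b + real p + 1"
proof -
  have "4 * real t \<le> 4 * (real b * (real p + 1))" using assms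
    by (metis of_nat_1 of_nat_add of_nat_le_iff of_nat_mult mult_le_cancel_left_pos zero_less_numeral)
  also have "\<dots> \<le> (real b + real p + 1)^2"
  proof -
    have "(real b + real p + 1)^2 - 4 * (real b * (real p + 1)) = (real b - real p - 1)^2"
      by (simp add: power2_eq_square algebra_simps)
    moreover have "0 \<le> (real b - real p - 1)^2" by simp
    ultimately show ?thesis by linarith
  qed
  finally have "sqrt (4 * real t) \<le> sqrt ((real b + real p + 1)^2)" by (rule real_sqrt_le_mono)
  then show ?thesis by (simp add: real_sqrt_mult)
qed

lemma arith1:
  fixes t s b p :: nat
  assumes "t \<le> b * (p + 1)"
  shows "nat \<lceil>2 * sqrt (real t) + real s - 1\<rceil> \<le> s + b + p"
proof -
  have "2 * sqrt (real t) + real s - 1 \<le> real (s + b + p)" using amgm_sqrt[OF assms] by simp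
  then have "\<lceil>2 * sqrt (real t) + real s - 1\<rceil> \<le> int (s + b + p)"
    by (intro ceiling_le) simp
  then show ?thesis by simp
qed

lemma arith2:
  fixes t s a p :: nat
  assumes "s \<le> a * (p + 1)" "1 \<le> s" "s \<le> t"
  shows "nat \<lceil>2 * sqrt (real t) + real s - 1\<rceil> \<le> t + a + p"
proof -
  have h: "2 * sqrt (real s) \<le> real a + real p + 1" by (rule amgm_sqrt[OF assms(1)])
  define x where "x = sqrt (real t)"
  define y where "y = sqrt (real s)"
  have y1: "1 \<le> y" using assms(2) by (simp add: y_def)
  have xy: "y \<le> x" using assms(3) by (simp add: x_def y_def)
  have "0 \<le> (x - y) * (x + y - 2)" using y1 xy by simp
  then have "2 * x + y^2 \<le> x^2 + 2 * y" by (simp add: algebra_simps power2_eq_square)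
  moreover have "x^2 = real t" "y^2 = real s" by (simp_all add: x_def y_def)
  ultimately have "2 * x + real s \<le> real t + 2 * y" by simp
  with h have "2 * sqrt (real t) + real s - 1 \<le> real (t + a + p)" by (simp add: x_def y_def)
  then have "\<lceil>2 * sqrt (real t) + real s - 1\<rceil> \<le> int (t + a + p)"
    by (intro ceiling_le) simp
  then show ?thesis by simp
qed

lemma arith3:
  fixes t s :: nat
  assumes "1 \<le> t"
  shows "\<exists>b p. 1 \<le> b \<and> b \<le> t \<and> t \<le> b * (p + 1) \<and> s + b + p \<le> nat \<lceil>2 * sqrt (real t) + real s - 1\<rceil>"
proof -
  define n where "n = nat \<lceil>2 * sqrt (real t)\<rceil>"
  have st1: "1 \<le> sqrt (real t)" using assms by simp
  have nge: "2 * sqrt (real t) \<le> real n" unfolding n_def by linarith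
  then have n2: "2 \<le> n" using st1 by linarith
  have "(2 * sqrt (real t))^2 \<le> (real n)^2" using nge st1 by (intro power_mono) auto
  then have "4 * real t \<le> (real n)^2" by (simp add: power_mult_distrib)
  then have n4: "4 * t \<le> n^2" by (metis of_nat_le_iff of_nat_mult of_nat_numeral of_nat_power)
  have L: "nat \<lceil>2 * sqrt (real t) + real s - 1\<rceil> = n + s - 1"
  proof -
    have "2 * sqrt (real t) + real s - 1 = 2 * sqrt (real t) + of_int (int s - 1)" by simp
    then have "\<lceil>2 * sqrt (real t) + real s - 1\<rceil> = \<lceil>2 * sqrt (real t) + of_int (int s - 1)\<rceil>" by (simp only:)
    also have "\<dots> = \<lceil>2 * sqrt (real t)\<rceil> + (int s - 1)" by (rule ceiling_add_of_int)
    finally show ?thesis using n2 unfolding n_def by linarith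
  qed
  define b0 where "b0 = n div 2"
  define c0 where "c0 = n - b0"
  obtain k r where nk: "n = 2 * k + r" and r: "r < 2" by (metis div_mod_decomp mod_less_divisor zero_less_numeral mult.commute)
  have b0k: "b0 = k" using nk r unfolding b0_def by auto
  have c0k: "c0 = k + r" using nk b0k unfolding c0_def by simp
  have "n^2 \<le> 4 * (b0 * c0) + 1"
  proof (cases "r = 0")
    case True then show ?thesis using nk b0k c0k by (simp add: power2_eq_square algebra_simps)
  next
    case False then have "r = 1" using r by simp
    then show ?thesis using nk b0k c0k by (simp add: power2_eq_square algebra_simps)
  qed
  with n4 have tb: "t \<le> b0 * c0" by linarith
  have c1: "1 \<le> c0" using n2 unfolding c0_def b0_def by simp
  define b where "b = min b0 t"
  define p where "p = c0 - 1"
  have "t \<le> b * (p + 1)"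
  proof (cases "b0 \<le> t")
    case True then show ?thesis using tb c1 by (simp add: b_def p_def)
  next
    case False then show ?thesis using c1 by (simp add: b_def p_def)
  qed
  moreover have "1 \<le> b" using calculation assms by (cases b) auto
  moreover have "s + b + p \<le> n + s - 1" using c1 unfolding b_def p_def c0_def b0_def by simp
  ultimately show ?thesis using L by (intro exI[of _ b] exI[of _ p]) (simp add: b_def)
qed


definition upfs :: "nat \<Rightarrow> nat \<Rightarrow> ((nat+nat) \<times> (nat+nat)) list" where
  "upfs b t = map (\<lambda>i. (Inr i, Inr (i + b))) [0..<t - b]"

lemma chron_up:
  assumes b1: "1 \<le> b" and bt: "b \<le> t"
  shows "j \<le> t - b \<Longrightarrow> chron (Kst_V s t) Kst_E (Inl ` {..<s} \<union> Inr ` {..<b + j}) (Inr ` {..<j})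
           (map (\<lambda>i. (Inr i, Inr (i + b))) [j..<t - b])"
proof (induction "t - b - j" arbitrary: j)
  case 0
  then have j: "j = t - b" by simp
  have "Inl ` {..<s} \<union> Inr ` {..<b + j} = Kst_V s t" using j bt by (simp add: Kst_V_def)
  then show ?case using j by (auto simp: can_force_def)
next
  case (Suc d)
  then have jl: "j < t - b" by simp
  have up: "[j..<t - b] = j # [Suc j..<t - b]" using jl by (simp add: upt_conv_Cons)
  have IH: "chron (Kst_V s t) Kst_E (Inl ` {..<s} \<union> Inr ` {..<b + Suc j}) (Inr ` {..<Suc j})
           (map (\<lambda>i. (Inr i, Inr (i + b))) [Suc j..<t - b])"
    using Suc.hyps(1)[of "Suc j"] Suc.hyps(2) jl by simp
  have e1: "insert (Inr (j + b)) (Inl ` {..<s} \<union> Inr ` {..<b + j}) = Inl ` {..<s} \<union> Inr ` {..<b + Suc j}"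
    by (auto simp: lessThan_Suc add.commute)
  have e2: "insert (Inr j) (Inr ` {..<j}) = (Inr ` {..<Suc j} :: (nat+nat) set)"
    by (auto simp: lessThan_Suc)
  have cf: "can_force (Kst_V s t) Kst_E (Inl ` {..<s} \<union> Inr ` {..<b + j}) (Inr ` {..<j}) (Inr j) (Inr (j + b))"
    using b1 jl unfolding can_force_def nbrs_Inr by (auto simp: Kst_V_def)
  show ?case unfolding up using cf IH e1 e2 by simp
qed

lemma rounds_up:
  assumes bt: "b \<le> t"
  shows "Inl ` {..<s} \<union> Inr ` {..<min t (b * (k + 1))} \<subseteq>
    rounds (Kst_V s t) Kst_E (Inl ` {..<s} \<union> Inr ` {..<b}) (set (upfs b t)) k"
proof (induction k)
  case 0 then show ?case by auto
next
  case (Suc k)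
  let ?R = "rounds (Kst_V s t) Kst_E (Inl ` {..<s} \<union> Inr ` {..<b}) (set (upfs b t))"
  show ?case
  proof
    fix x assume x: "x \<in> Inl ` {..<s} \<union> Inr ` {..<min t (b * (Suc k + 1))}"
    show "x \<in> ?R (Suc k)"
    proof (cases "x \<in> ?R k")
      case True then show ?thesis by simp
    next
      case False
      have xn: "x \<notin> Inl ` {..<s} \<union> Inr ` {..<min t (b * (k + 1))}" using False Suc.IH by blast
      from x xn obtain j where xj: "x = Inr j" and jm: "j < min t (b * (Suc k + 1))"
        and jn: "\<not> j < min t (b * (k + 1))" by blast
      have j2: "j < t" using jm by simp
      have j3: "j < b * (k + 1) + b" using jm by (simp add: algebra_simps)
      have j1: "b * (k + 1) \<le> j" using jn j2 by simp
      have "b \<le> b * (k + 1)" by simp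
      then have jb: "b \<le> j" using j1 by linarith
      have jmb: "j - b < min t (b * (k + 1))" using j2 j3 jb by (simp; arith)
      have inF: "(Inr (j - b), Inr j) \<in> set (upfs b t)"
        using jb j2 unfolding upfs_def by (auto intro!: image_eqI[of _ _ "j - b"])
      have "Inr (j - b) \<in> ?R k" using Suc.IH jmb by blast
      moreover have "nbrs (Kst_V s t) Kst_E (Inr (j - b)) \<subseteq> ?R k" using Suc.IH by (auto simp: nbrs_Inr)
      ultimately show ?thesis using False inF xj by auto
    qed
  qed
qed


theorem proposition3p7:
  fixes s t :: nat
  assumes "s \<le> t" and "t \<ge> 1"
  shows "th_H (Kst_V s t) Kst_E = enat (nat \<lceil>2 * sqrt (real t) + real s - 1\<rceil>)"
proof -
  define V where "V = Kst_V s t"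
  define L where "L = nat \<lceil>2 * sqrt (real t) + real s - 1\<rceil>"
  have finV: "finite V" by (simp add: V_def Kst_V_def)
  have VL: "{v\<in>V. isl v} = Inl ` {..<s}" by (auto simp: V_def Kst_V_def)
  have VR: "{v\<in>V. \<not> isl v} = Inr ` {..<t}" by (auto simp: V_def Kst_V_def)
  have cL: "card (Inl ` {..<s} :: (nat+nat) set) = s" by (simp add: card_image)
  have cR: "card (Inr ` {..<t} :: (nat+nat) set) = t" by (simp add: card_image)
  have lowF: "L \<le> card B + p"
    if BV: "B \<subseteq> V" and ch: "chron_list V Kst_E B fs" and fin: "rounds V Kst_E B (set fs) p = V"
      and nf: "\<forall>k<p. rounds V Kst_E B (set fs) k \<noteq> V" for B fs p
  proof -
    have cp: "distinct (map fst fs) \<and> fst ` set fs \<inter> {} = {} \<and> snd ` set fs \<subseteq> V"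
      using ch unfolding chron_list_def by (rule chron_props)
    have FV: "\<And>v w. (v,w)\<in>set fs \<Longrightarrow> w\<in>V" using cp by force
    have inj: "inj_on fst (set fs)" using cp by (simp add: distinct_map)
    have Ffun: "\<And>v w w'. (v,w)\<in>set fs \<Longrightarrow> (v,w')\<in>set fs \<Longrightarrow> w = w'"
      using inj by (metis fst_conv inj_onD prod.inject)
    have finB: "finite B" using BV finV by (rule finite_subset)
    show ?thesis
    proof (cases "Inl ` {..<s} \<subseteq> B")
      case True
      have E: "\<And>x y. Kst_E x y \<longleftrightarrow> isl x \<noteq> isl y" by (simp add: Kst_E_def)
      have g: "card {v\<in>V. \<not> isl v} \<le> card (B \<inter> {v. \<not> isl v}) * (p+1)"
        by (rule generic[OF finV E BV _ FV Ffun fin]) (use True VL nf in auto)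
      have "B = Inl ` {..<s} \<union> (B \<inter> {v. \<not> isl v})" using True BV VL by auto
      moreover have "card (Inl ` {..<s} \<union> (B \<inter> {v. \<not> isl v})) = card (Inl ` {..<s} :: (nat+nat) set) + card (B \<inter> {v. \<not> isl v})"
        by (rule card_Un_disjoint) (use finB in auto)
      ultimately have cB: "card B = s + card (B \<inter> {v. \<not> isl v})" using cL by simp
      have "t \<le> card (B \<inter> {v. \<not> isl v}) * (p+1)" using g VR cR by simp
      from arith1[OF this, of s] show ?thesis unfolding L_def cB by simp
    next
      case nA: False
      show ?thesis
      proof (cases "Inr ` {..<t} \<subseteq> B")
        case True
        have E: "\<And>x y. Kst_E x y \<longleftrightarrow> (\<not> isl x) \<noteq> (\<not> isl y)" by (auto simp: Kst_E_def)
        have g: "card {v\<in>V. \<not> \<not> isl v} \<le> card (B \<inter> {v. \<not> \<not> isl v}) * (p+1)"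
          by (rule generic[OF finV E BV _ FV Ffun fin]) (use True VR nf in auto)
        have "B = Inr ` {..<t} \<union> (B \<inter> {v. isl v})" using True BV VR by auto
        moreover have "card (Inr ` {..<t} \<union> (B \<inter> {v. isl v})) = card (Inr ` {..<t} :: (nat+nat) set) + card (B \<inter> {v. isl v})"
          by (rule card_Un_disjoint) (use finB in auto)
        ultimately have cB: "card B = t + card (B \<inter> {v. isl v})" using cR by simp
        have sa: "s \<le> card (B \<inter> {v. isl v}) * (p+1)" using g VL cL by simp
        have s1: "1 \<le> s" using nA by (cases s) auto
        from arith2[OF sa s1 assms(1)] show ?thesis unfolding L_def cB by simp
      next
        case False
        have "\<forall>v\<in>B. \<not> nbrs V Kst_E v \<subseteq> B"
        proof
          fix v assume "v \<in> B"
          show "\<not> nbrs V Kst_E v \<subseteq> B"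
          proof (cases v)
            case (Inl i) then show ?thesis using False by (simp add: V_def nbrs_Inl)
          next
            case (Inr i) then show ?thesis using nA by (simp add: V_def nbrs_Inr)
          qed
        qed
        then have "rounds V Kst_E B (set fs) p = B" by (rule rounds_stuck)
        with fin have "B = V" by simp
        with nA show ?thesis by (auto simp: V_def Kst_V_def)
      qed
    qed
  qed
  have lower: "enat L \<le> enat (card B) + pt_H V Kst_E B" if BV: "B \<subseteq> V" for B
  proof (cases "hopping_forcing_set V Kst_E B")
    case False then show ?thesis by (simp add: pt_H_def)
  next
    case True
    have "enat (L - card B) \<le> pt_H V Kst_E B"
      unfolding pt_H_def using True
    proof (simp, intro INF_greatest)
      fix F assume "F \<in> {F. force_set V Kst_E B F}"
      then obtain fs where ch: "chron_list V Kst_E B fs" and F: "F = set fs"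
        by (auto simp: force_set_def)
      show "enat (L - card B) \<le> pt_H_forces V Kst_E B F"
      proof (cases "\<exists>k. rounds V Kst_E B F k = V")
        case False then show ?thesis by (simp add: pt_H_forces_def)
      next
        case True
        define p where "p = (LEAST k. rounds V Kst_E B F k = V)"
        have fin: "rounds V Kst_E B (set fs) p = V" unfolding p_def F by (rule LeastI_ex) (use True F in simp)
        have nf: "\<forall>k<p. rounds V Kst_E B (set fs) k \<noteq> V" unfolding p_def F
          using not_less_Least by blast
        have "L \<le> card B + p" by (rule lowF[OF BV ch fin nf])
        then show ?thesis using True by (simp add: pt_H_forces_def p_def)
      qed
    qed
    then have "enat (card B) + enat (L - card B) \<le> enat (card B) + pt_H V Kst_E B"
      by (rule add_left_mono)
    moreover have "enat L \<le> enat (card B) + enat (L - card B)" by simp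
    ultimately show ?thesis by (rule order_trans[rotated])
  qed
  obtain b p where b1: "1 \<le> b" and bt: "b \<le> t" and tb: "t \<le> b * (p + 1)"
    and bp: "s + b + p \<le> L" using arith3[OF assms(2), of s] unfolding L_def by blast
  define B0 where "B0 = Inl ` {..<s} \<union> (Inr ` {..<b} :: (nat+nat) set)"
  define fs where "fs = upfs b t"
  have B0V: "B0 \<subseteq> V" using bt by (auto simp: B0_def V_def Kst_V_def)
  have ch: "chron_list V Kst_E B0 fs"
    using chron_up[OF b1 bt, of 0 s] by (simp add: chron_list_def V_def B0_def fs_def upfs_def)
  have cp: "distinct (map fst fs) \<and> fst ` set fs \<inter> {} = {} \<and> snd ` set fs \<subseteq> V"
    using ch unfolding chron_list_def by (rule chron_props)
  have FV: "\<And>v w. (v,w)\<in>set fs \<Longrightarrow> w\<in>V" using cp by force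
  have rsub: "rounds V Kst_E B0 (set fs) p \<subseteq> V" by (rule rounds_sub[OF B0V FV])
  have "Inl ` {..<s} \<union> Inr ` {..<min t (b * (p + 1))} \<subseteq> rounds V Kst_E B0 (set fs) p"
    using rounds_up[OF bt, of s p] by (simp add: V_def B0_def fs_def)
  moreover have "min t (b * (p + 1)) = t" using tb by simp
  ultimately have "V \<subseteq> rounds V Kst_E B0 (set fs) p" by (simp add: V_def Kst_V_def)
  with rsub have rp: "rounds V Kst_E B0 (set fs) p = V" by auto
  have hop: "hopping_forcing_set V Kst_E B0"
    unfolding hopping_forcing_set_def
  proof (intro exI conjI)
    show "chron_list V Kst_E B0 fs" by (rule ch)
    have "V \<subseteq> B0 \<union> snd ` set fs"
    proof
      fix x assume "x \<in> V"
      then have "x \<in> rounds V Kst_E B0 (set fs) p" using rp by simp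
      moreover have "rounds V Kst_E B0 (set fs) k \<subseteq> B0 \<union> snd ` set fs" for k
        by (induction k) (auto intro: rev_image_eqI)
      ultimately show "x \<in> B0 \<union> snd ` set fs" by blast
    qed
    then show "B0 \<union> snd ` set fs = V" using B0V cp by auto
  qed
  have "pt_H_forces V Kst_E B0 (set fs) \<le> enat p"
    using rp by (auto simp: pt_H_forces_def intro: Least_le)
  moreover have "pt_H V Kst_E B0 \<le> pt_H_forces V Kst_E B0 (set fs)"
    unfolding pt_H_def using hop ch by (auto simp: force_set_def intro!: INF_lower)
  ultimately have ptle: "pt_H V Kst_E B0 \<le> enat p" by simp
  have cB0: "card B0 = s + b" unfolding B0_def
    by (subst card_Un_disjoint) (auto simp: card_image)
  have upper: "enat (card B0) + pt_H V Kst_E B0 \<le> enat L"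
  proof -
    have "enat (card B0) + pt_H V Kst_E B0 \<le> enat (card B0) + enat p" using ptle by (rule add_left_mono)
    also have "\<dots> \<le> enat L" using bp cB0 by simp
    finally show ?thesis .
  qed
  have "th_H V Kst_E = enat L"
  proof (rule antisym)
    show "th_H V Kst_E \<le> enat L" unfolding th_H_def
      by (rule INF_lower2[of B0]) (use B0V upper in auto)
    show "enat L \<le> th_H V Kst_E" unfolding th_H_def
      by (rule INF_greatest) (use lower in auto)
  qed
  then show ?thesis by (simp add: V_def L_def)
qed

end
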